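(* Let $\{\eta_n\}_{n\ge1}$ be nonzero complex numbers with $|\eta_n|$ nondecreasing, such that there exist $N,C>0$ with $|\eta_n|\ge Cn^2$ for $n\ge N$. Let $D_n$, $n=0,1,2,\dots$, be open discs of radius $R>0$ centred at $c_n$, with $c_0=0$ and $|\eta_n-c_n|\le R/2$ for $n\ge1$, and assume there is $\tilde N$ such that the closed discs $\overline D_n$ are pairwise disjoint for $n>\tilde N$. For an integer $m\ge0$ let $P(\lambda)=\lambda^m\prod_{n=1}^\infty(1-\lambda/\eta_n)$. Then $1/P\in\mathcal A_1\big(\mathbb{C}\setminus\bigcup_{n=0}^\infty\overline D_n\big)$.
   Context: For an open set $\Omega'\subset\mathbb{C}$ and $p>0$, $\mathcal A_p(\Omega')$ is the set of holomorphic $f$ on $\Omega'$ for which there exist $c,M>0$ with $|f(\lambda)|\le Me^{c|\lambda|^p}$ for all $\lambda\in\Omega'$. Here $1/P$ denotes the multiplicative inverse of $P$. *)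

theory Defs
  imports "HOL-Analysis.Analysis"
begin

definition A_class :: "real \<Rightarrow> complex set \<Rightarrow> (complex \<Rightarrow> complex) \<Rightarrow> bool" where
  "A_class p \<Omega> f \<longleftrightarrow> f holomorphic_on \<Omega> \<and>
     (\<exists>c M. c > 0 \<and> M > 0 \<and> (\<forall>w\<in>\<Omega>. norm (f w) \<le> M * exp (c * norm w powr p)))"

definition canonical_prod :: "nat \<Rightarrow> (nat \<Rightarrow> complex) \<Rightarrow> complex \<Rightarrow> complex" where
  "canonical_prod m \<eta> z = z ^ m * (\<Prod>k. 1 - z / \<eta> (Suc k))"

end

theory Submission
  imports Defs "HOL-Complex_Analysis.Complex_Analysis"
begin

lemma factor_far:
  fixes x :: real assumes "0 \<le> x" "x \<le> 1/2"
  shows "exp (-2*x) \<le> 1 - x"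
proof -
  have "1 + 2*x \<le> exp (2*x)" by (rule exp_ge_add_one_self)
  hence "exp (-2*x) \<le> 1/(1+2*x)"
    using assms by (simp add: exp_minus field_simps)
  also have "\<dots> \<le> 1 - x"
  proof -
    have "2*x*x \<le> 1*x" using assms by (intro mult_right_mono) auto
    thus ?thesis using assms by (simp add: field_simps)
  qed
  finally show ?thesis .
qed

lemma fin_bound:
  fixes a :: "nat \<Rightarrow> complex" and z :: complex and I :: "nat set"
  assumes anz: "\<And>n. a n \<noteq> 0"
    and far: "\<And>n. norm (z - a n) \<ge> R/2"
    and R: "R > 0" and C: "C > 0"
    and lb: "\<And>n. Suc n \<ge> N \<Longrightarrow> C * real (Suc n)^2 \<le> norm (a n)"
    and sm: "summable (\<lambda>n. 1 / norm (a n))"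
    and I: "finite I"
  shows "(R/(4*(norm z+R)))^(N + nat \<lceil>sqrt(2*norm z/C)\<rceil>) * exp(-2*norm z*(\<Sum>n. 1/norm(a n)))
          \<le> norm (\<Prod>i\<in>I. 1 - z/a i)"
proof -
  define \<rho> where "\<rho> = norm z + R"
  define q where "q = R/(4*\<rho>)"
  define K where "K = N + nat \<lceil>sqrt(2*norm z/C)\<rceil>"
  define S where "S = (\<Sum>n. 1/norm(a n))"
  define A where "A = {i. norm (a i) \<le> 2 * norm z}"
  have rho: "\<rho> > 0" "\<rho> \<ge> norm z" using R by (auto simp: \<rho>_def intro: add_nonneg_pos)
  have q0: "q > 0" "q \<le> 1" using R rho by (auto simp: q_def field_simps \<rho>_def)
  have n1: "norm (\<Prod>i\<in>I. 1 - z/a i) = (\<Prod>i\<in>I\<inter>A. norm (1 - z/a i)) * (\<Prod>i\<in>I-A. norm (1 - z/a i))"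
    by (subst prod.Int_Diff[OF I, of _ A]) (simp only: norm_mult prod_norm)
  have fA: "q \<le> norm (1 - z/a i)" if "i \<in> A" for i
  proof -
    have "norm (1 - z/a i) = norm (a i - z) / norm (a i)"
      using anz[of i] by (simp add: norm_divide[symmetric] diff_divide_distrib)
    moreover have "norm (a i - z) \<ge> R/2" using far[of i] by (simp add: norm_minus_commute)
    moreover have "norm (a i) \<le> 2 * \<rho>" using that rho by (auto simp: A_def)
    moreover have "norm (a i) > 0" using anz[of i] by simp
    ultimately have e: "norm (1 - z/a i) = norm (a i - z) / norm (a i)" and
      h: "R/2 \<le> norm (a i - z)" "norm (a i) \<le> 2 * \<rho>" "0 < norm (a i)" by blast+
    have "q = (R/2) / (2*\<rho>)" unfolding q_def by simp
    also have "\<dots> \<le> (R/2) / norm (a i)"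
      using h R rho by (intro divide_left_mono) auto
    also have "\<dots> \<le> norm (a i - z) / norm (a i)"
      using h by (intro divide_right_mono) auto
    finally show ?thesis using e by simp
  qed
  have cardA: "I \<inter> A \<subseteq> {..<K}"
  proof
    fix i assume i: "i \<in> I \<inter> A"
    show "i \<in> {..<K}"
    proof (cases "Suc i \<ge> N")
      case True
      have "C * real (Suc i)^2 \<le> 2 * norm z" using lb[OF True] i by (auto simp: A_def)
      hence "real (Suc i)^2 \<le> 2 * norm z / C" using C by (simp add: field_simps)
      hence "real (Suc i) \<le> sqrt (2 * norm z / C)" using real_le_rsqrt by blast
      also have "\<dots> \<le> real (nat \<lceil>sqrt(2*norm z/C)\<rceil>)" by linarith
      finally show ?thesis unfolding K_def by simp
    qed (simp add: K_def)
  qed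
  have p1: "q ^ K \<le> (\<Prod>i\<in>I\<inter>A. norm (1 - z/a i))"
  proof -
    have "q ^ K \<le> q ^ card (I \<inter> A)"
      using card_mono[OF _ cardA] q0 by (intro power_decreasing) auto
    also have "\<dots> = (\<Prod>i\<in>I\<inter>A. q)" by simp
    also have "\<dots> \<le> (\<Prod>i\<in>I\<inter>A. norm (1 - z/a i))"
      using fA q0 by (intro prod_mono) auto
    finally show ?thesis .
  qed
  have fnA: "exp (-2 * norm z * (1/norm (a i))) \<le> norm (1 - z/a i)" if "i \<notin> A" for i
  proof -
    have x: "norm z / norm (a i) \<le> 1/2" "0 \<le> norm z / norm (a i)"
      using that anz[of i] by (auto simp: A_def field_simps)
    have "exp (-2 * norm z * (1/norm (a i))) = exp (-2 * (norm z / norm (a i)))" by simp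
    also have "\<dots> \<le> 1 - norm z / norm (a i)" by (rule factor_far[OF x(2) x(1)])
    also have "\<dots> = norm (1::complex) - norm (z / a i)" by (simp add: norm_divide)
    also have "\<dots> \<le> norm (1 - z/a i)" by (rule norm_triangle_ineq2)
    finally show ?thesis .
  qed
  have p2: "exp (-2 * norm z * S) \<le> (\<Prod>i\<in>I-A. norm (1 - z/a i))"
  proof -
    have "(\<Sum>i\<in>I-A. 1/norm (a i)) \<le> S"
      unfolding S_def using I sm by (intro sum_le_suminf) auto
    hence "exp (-2 * norm z * S) \<le> exp (-2 * norm z * (\<Sum>i\<in>I-A. 1/norm (a i)))"
      by (simp add: mult_left_mono)
    also have "\<dots> = (\<Prod>i\<in>I-A. exp (-2 * norm z * (1/norm (a i))))"
      by (simp add: sum_distrib_left exp_sum I)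
    also have "\<dots> \<le> (\<Prod>i\<in>I-A. norm (1 - z/a i))"
      using fnA by (intro prod_mono) auto
    finally show ?thesis .
  qed
  show ?thesis
    unfolding n1 q_def[symmetric] \<rho>_def[symmetric] K_def[symmetric] S_def[symmetric]
    using p1 p2 q0 by (intro mult_mono) (auto intro: prod_nonneg)
qed

lemma growth_est:
  fixes R C r :: real and N :: nat
  assumes R: "R > 0" and C: "C > 0" and r: "r \<ge> 0"
  shows "(4*(r+R)/R)^(N + nat \<lceil>sqrt(2*r/C)\<rceil>) \<le>
    exp ((2*(N+1)* sqrt(4/R)*(1+R) + 2* sqrt(4/R)* sqrt(2/C)*R) + (2*(N+1)* sqrt(4/R) + 2* sqrt(4/R)* sqrt(2/C)) * r)"
proof -
  define \<rho> where "\<rho> = r + R"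
  define \<alpha> where "\<alpha> = sqrt(4/R)"
  define \<beta> where "\<beta> = sqrt(2/C)"
  define u where "u = sqrt \<rho>"
  define x where "x = 4*\<rho>/R"
  define K where "K = N + nat \<lceil>sqrt(2*r/C)\<rceil>"
  have rho: "\<rho> > 0" using R r by (simp add: \<rho>_def)
  have u: "u \<ge> 0" "u*u = \<rho>" using rho by (auto simp: u_def)
  have ab: "\<alpha> \<ge> 0" "\<beta> \<ge> 0" using R C by (auto simp: \<alpha>_def \<beta>_def)
  have x1: "x \<ge> 1" using R r by (simp add: x_def \<rho>_def field_simps)
  have sx: "sqrt x = \<alpha> * u" unfolding x_def \<alpha>_def u_def
    by (simp add: real_sqrt_mult[symmetric])
  have "sqrt(2*r/C) \<le> sqrt(2*\<rho>/C)"
    using C R by (intro real_sqrt_le_mono divide_right_mono) (auto simp: \<rho>_def)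
  also have "\<dots> = \<beta> * u" unfolding \<beta>_def u_def by (simp add: real_sqrt_mult[symmetric])
  moreover have "real (nat \<lceil>sqrt(2*r/C)\<rceil>) \<le> sqrt(2*r/C) + 1"
  proof -
    have s0: "sqrt(2*r/C) \<ge> 0" using r C by simp
    hence "real (nat \<lceil>sqrt(2*r/C)\<rceil>) = of_int \<lceil>sqrt(2*r/C)\<rceil>" by (simp add: of_nat_nat)
    thus ?thesis using ceiling_correct[of "sqrt(2*r/C)"] by linarith
  qed
  ultimately have Kb: "real K \<le> N + 1 + \<beta> * u"
    unfolding K_def by simp
  have lnx: "ln x \<le> 2 * (\<alpha> * u)"
  proof -
    have sp: "sqrt x > 0" using x1 by simp
    have "ln x = 2 * ln (sqrt x)" using x1 by (simp add: ln_sqrt)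
    also have "\<dots> \<le> 2 * (sqrt x - 1)" using ln_le_minus_one[OF sp] by simp
    finally show ?thesis using sx by simp
  qed
  have ln0: "ln x \<ge> 0" using x1 by simp
  have "x ^ K = exp (real K * ln x)" using x1 by (simp add: exp_of_nat_mult)
  also have "real K * ln x \<le> (N + 1 + \<beta> * u) * (2 * (\<alpha> * u))"
    using Kb lnx ln0 u ab by (intro mult_mono) auto
  also have "\<dots> = 2*(N+1)*\<alpha>*u + 2*\<alpha>*\<beta>*(u*u)" by (simp add: algebra_simps)
  also have "\<dots> \<le> 2*(N+1)*\<alpha>*(1+\<rho>) + 2*\<alpha>*\<beta>*\<rho>"
  proof -
    have "0 \<le> (u - 1/2) * (u - 1/2)" by simp
    hence "u \<le> 1 + u*u" by (simp add: algebra_simps)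
    hence "2*(N+1)*\<alpha>*u \<le> 2*(N+1)*\<alpha>*(1+\<rho>)" using ab u by (intro mult_left_mono) auto
    thus ?thesis using u by simp
  qed
  also have "\<dots> = (2*(N+1)*\<alpha>*(1+R) + 2*\<alpha>*\<beta>*R) + (2*(N+1)*\<alpha> + 2*\<alpha>*\<beta>) * r"
    by (simp add: \<rho>_def algebra_simps)
  finally show ?thesis unfolding x_def \<rho>_def K_def \<alpha>_def \<beta>_def by simp
qed

theorem proposition8:
  fixes \<eta> :: "nat \<Rightarrow> complex" and c :: "nat \<Rightarrow> complex" and R :: real and m :: nat
  assumes nonzero: "\<forall>n\<ge>1. \<eta> n \<noteq> 0"
    and mono: "\<forall>n\<ge>1. norm (\<eta> n) \<le> norm (\<eta> (Suc n))"
    and growth: "\<exists>N C. N > 0 \<and> C > 0 \<and> (\<forall>n\<ge>N. norm (\<eta> n) \<ge> C * real n ^ 2)"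
    and R_pos: "R > 0"
    and c0: "c 0 = 0"
    and near: "\<forall>n\<ge>1. norm (\<eta> n - c n) \<le> R / 2"
    and disj: "\<exists>N'. \<forall>n m'. n > N' \<and> m' > N' \<and> n \<noteq> m' \<longrightarrow> cball (c n) R \<inter> cball (c m') R = {}"
  shows "A_class 1 (- (\<Union>n. cball (c n) R)) (\<lambda>z. 1 / canonical_prod m \<eta> z)"
proof -
  obtain N0 C where N0: "N0 > 0" and C: "C > 0" and gr: "\<And>n. n \<ge> N0 \<Longrightarrow> norm (\<eta> n) \<ge> C * real n ^ 2"
    using growth by blast
  define a where "a n = \<eta> (Suc n)" for n
  have anz: "a n \<noteq> 0" for n using nonzero by (simp add: a_def)
  have lb: "C * real (Suc n)^2 \<le> norm (a n)" if "Suc n \<ge> N0" for n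
    using gr[OF that] by (simp add: a_def)
  have sm: "summable (\<lambda>n. 1 / norm (a n))"
  proof (rule summable_comparison_test')
    have "summable (\<lambda>n. inverse (real n ^ 2))" by (rule inverse_power_summable) simp
    hence "summable (\<lambda>n. inverse (real (Suc n) ^ 2))"
      by (subst summable_Suc_iff)
    thus "summable (\<lambda>n. (1/C) * inverse (real (Suc n) ^ 2))" by (rule summable_mult)
  next
    fix n assume n: "n \<ge> N0"
    hence "C * real (Suc n)^2 \<le> norm (a n)" by (intro lb) simp
    moreover have "C * real (Suc n)^2 > 0" using C by simp
    ultimately have "1 / norm (a n) \<le> 1 / (C * real (Suc n)^2)"
      using anz[of n] by (intro divide_left_mono) auto
    thus "norm (1 / norm (a n)) \<le> (1/C) * inverse (real (Suc n) ^ 2)"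
      by (simp add: field_simps)
  qed
  have lim: "filterlim a at_infinity at_top"
    unfolding filterlim_at_infinity_conv_norm_at_top
  proof (rule filterlim_at_top_mono)
    show "filterlim (\<lambda>n. C * real n) at_top sequentially"
      using C by (intro filterlim_tendsto_pos_mult_at_top[OF tendsto_const] filterlim_real_sequentially) auto
    show "\<forall>\<^sub>F n in sequentially. C * real n \<le> norm (a n)"
      using eventually_ge_at_top[of N0]
    proof eventually_elim
      case (elim n)
      have "n \<le> Suc n ^ 2" by (simp add: power2_eq_square)
      hence "real n \<le> real (Suc n)^2" by (metis of_nat_le_iff of_nat_power)
      hence "C * real n \<le> C * real (Suc n)^2" using C by simp
      also have "\<dots> \<le> norm (a n)" using elim by (intro lb) simp
      finally show ?case .
    qed
  qed
  interpret W: weierstrass_product a "\<lambda>_. 0"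
  proof
    show "a n \<noteq> 0" for n by (rule anz)
    show "filterlim a at_infinity at_top" by (rule lim)
    show "summable (\<lambda>n. (r / norm (a n)) ^ Suc 0)" if "r > 0" for r
      using summable_mult[OF sm, of r] by simp
  qed
  have wf: "weierstrass_factor 0 w = 1 - w" for w by (simp add: weierstrass_factor_def)
  have Wf: "W.f z = (\<Prod>n. 1 - z / a n)" for z by (simp add: W.f_def wf)
  have cp: "canonical_prod m \<eta> z = z ^ m * W.f z" for z
    by (simp add: canonical_prod_def Wf a_def)
  have conv: "convergent_prod (\<lambda>n. 1 - z / a n)" for z
    using W.convergent[of z] by (simp add: wf)
  define S where "S = (\<Sum>n. 1/norm(a n))"
  have S0: "S \<ge> 0" unfolding S_def using sm by (intro suminf_nonneg) auto
  define A0 where "A0 = 2*(N0+1)* sqrt(4/R)*(1+R) + 2* sqrt(4/R)* sqrt(2/C)*R"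
  define A1 where "A1 = 2*(N0+1)* sqrt(4/R) + 2* sqrt(4/R)* sqrt(2/C)"
  have A1: "A1 \<ge> 0" using R_pos C by (simp add: A1_def)
  define \<Omega> where "\<Omega> = - (\<Union>n. cball (c n) R)"
  have key: "norm z > R \<and> W.f z \<noteq> 0 \<and> 1 / norm (W.f z) \<le> exp (A0 + (A1 + 2*S) * norm z)"
    if z: "z \<in> \<Omega>" for z
  proof -
    have "z \<notin> cball (c 0) R" using z unfolding \<Omega>_def by blast
    hence zR: "norm z > R" using c0 by (simp add: dist_norm)
    have far: "norm (z - a n) \<ge> R/2" for n
    proof -
      have "z \<notin> cball (c (Suc n)) R" using z unfolding \<Omega>_def by blast
      hence "dist (c (Suc n)) z > R" by simp
      hence "norm (z - c (Suc n)) > R" by (simp add: dist_norm norm_minus_commute)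
      moreover have "norm (a n - c (Suc n)) \<le> R/2" using near by (simp add: a_def)
      moreover have "norm (z - c (Suc n)) \<le> norm (z - a n) + norm (a n - c (Suc n))"
        by (rule order_trans[OF _ norm_triangle_ineq]) simp
      ultimately show ?thesis by linarith
    qed
    define q where "q = R/(4*(norm z+R))"
    define K where "K = N0 + nat \<lceil>sqrt(2*norm z/C)\<rceil>"
    define B where "B = q ^ K * exp(-2*norm z*S)"
    have q0: "q > 0" using R_pos by (simp add: q_def add_nonneg_pos)
    have B0: "B > 0" using q0 by (simp add: B_def)
    have "B \<le> norm (W.f z)"
    proof (rule tendsto_lowerbound)
      show "(\<lambda>n. norm (\<Prod>i\<le>n. 1 - z / a i)) \<longlonglongrightarrow> norm (W.f z)"
        unfolding Wf by (intro tendsto_norm convergent_prod_LIMSEQ conv)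
      show "\<forall>\<^sub>F n in sequentially. B \<le> norm (\<Prod>i\<le>n. 1 - z / a i)"
        unfolding B_def q_def K_def S_def
        by (intro always_eventually allI fin_bound[OF anz far R_pos C lb sm]) auto
    qed simp
    hence fz: "W.f z \<noteq> 0" using B0 by auto
    have "1 / norm (W.f z) \<le> 1 / B" using B0 \<open>B \<le> norm (W.f z)\<close> by (intro divide_left_mono mult_pos_pos) auto
    also have "1 / B = (4*(norm z+R)/R) ^ K * exp (2*norm z*S)"
      unfolding B_def q_def using R_pos by (simp add: exp_minus power_divide field_simps)
    also have "\<dots> \<le> exp (A0 + A1 * norm z) * exp (2*norm z*S)"
      unfolding K_def A0_def A1_def using growth_est[OF R_pos C norm_ge_zero[of z], of N0]
      by (intro mult_right_mono) auto
    also have "\<dots> = exp (A0 + (A1 + 2*S) * norm z)" by (simp add: exp_add[symmetric] algebra_simps)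
    finally show ?thesis using zR fz by blast
  qed
  show ?thesis unfolding A_class_def \<Omega>_def[symmetric]
  proof (rule conjI)
    show "(\<lambda>z. 1 / canonical_prod m \<eta> z) holomorphic_on \<Omega>"
      unfolding cp
    proof (intro holomorphic_intros W.holomorphic)
      fix z assume "z \<in> \<Omega>"
      with key[OF this] R_pos show "z ^ m * W.f z \<noteq> 0" by auto
    qed
  next
    show "\<exists>c M. 0 < c \<and> 0 < M \<and> (\<forall>w\<in>\<Omega>. norm (1 / canonical_prod m \<eta> w) \<le> M * exp (c * norm w powr 1))"
    proof (rule exI[of _ "A1 + 2*S + 1"], rule exI[of _ "exp A0 / R ^ m"], intro conjI)
    show "A1 + 2*S + 1 > 0" using A1 S0 by simp
    show "exp A0 / R ^ m > 0" using R_pos by simp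
    show "\<forall>w\<in>\<Omega>. norm (1 / canonical_prod m \<eta> w) \<le> exp A0 / R ^ m * exp ((A1 + 2*S + 1) * norm w powr 1)"
    proof
      fix w assume w: "w \<in> \<Omega>"
      note k = key[OF w]
      have "norm (1 / canonical_prod m \<eta> w) = (1 / norm w ^ m) * (1 / norm (W.f w))"
        by (simp add: cp norm_divide norm_mult norm_power)
      also have "\<dots> \<le> (1 / R ^ m) * exp (A0 + (A1 + 2*S) * norm w)"
        using k R_pos by (intro mult_mono divide_left_mono power_mono mult_pos_pos zero_less_power) auto
      also have "\<dots> \<le> (1 / R ^ m) * exp (A0 + (A1 + 2*S + 1) * norm w)"
        using R_pos k by (intro mult_left_mono) (auto simp: algebra_simps)
      also have "\<dots> = exp A0 / R ^ m * exp ((A1 + 2*S + 1) * norm w powr 1)"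
        by (simp add: exp_add)
      finally show "norm (1 / canonical_prod m \<eta> w) \<le> exp A0 / R ^ m * exp ((A1 + 2*S + 1) * norm w powr 1)" .
    qed
    qed
  qed
qed

end
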